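(* Let $a,b,c,p\in\mathbb{C}$ with $-c\notin\mathbb{N}\cup\{0\}$. Suppose that \[ e^{pz}F(a,b;c;z)=\sum_{n=0}^\infty u_nz^n,\qquad |z|<1. \] Then $u_0=1$, $u_1=\frac{ab}{c}+p$, $u_2=\frac{a(1+a)b(1+b)}{2c(1+c)}+\frac{abp}{c}+\frac{p^2}{2}$, and for all integers $n\ge2$, \[ u_{n+1}=\frac{(a+n)(b+n)+p(c+2n)}{(n+1)(c+n)}u_n-\frac{p(a+b+2n+p-1)}{(n+1)(c+n)}u_{n-1}+\frac{p^2}{(n+1)(c+n)}u_{n-2}. \]
   Context: For $a\in\mathbb{C}$, $(a)_n=a(a+1)\cdots(a+n-1)$ denotes the Pochhammer symbol, with $(a)_0=1$. For $a,b,c\in\mathbb{C}$ with $-c\notin\mathbb{N}\cup\{0\}$, the Gaussian hypergeometric function is $F(a,b;c;z)=\sum_{n=0}^\infty \frac{(a)_n(b)_n}{(c)_n\,n!}z^n$, $|z|<1$. *)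

theory Defs
  imports "HOL-Analysis.Analysis"
begin

definition hyp2f1 :: "complex \<Rightarrow> complex \<Rightarrow> complex \<Rightarrow> complex \<Rightarrow> complex" where
  "hyp2f1 a b c z =
     (\<Sum>n. pochhammer a n * pochhammer b n / (pochhammer c n * fact n) * z ^ n)"

end

theory Submission imports Defs "HOL-Complex_Analysis.Complex_Analysis" begin

definition hc :: "complex \<Rightarrow> complex \<Rightarrow> complex \<Rightarrow> nat \<Rightarrow> complex" where
  "hc a b c n = pochhammer a n * pochhammer b n / (pochhammer c n * fact n)"

lemma hc_rec:
  assumes c_ok: "\<forall>m::nat. c \<noteq> - of_nat m"
  shows "hc a b c (Suc n) * ((of_nat n + 1) * (c + of_nat n)) = hc a b c n * ((a + of_nat n) * (b + of_nat n))"
proof -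
  have p: "pochhammer c n \<noteq> 0" using c_ok by (auto simp: pochhammer_eq_0_iff)
  have q: "c + of_nat n \<noteq> 0" using c_ok by (metis add.commute add_eq_0_iff)
  have f: "(fact n :: complex) \<noteq> 0" by simp
  have g: "(1 + of_nat n :: complex) \<noteq> 0" by (metis of_nat_Suc of_nat_eq_0_iff nat.distinct(1) add.commute)
  show ?thesis unfolding hc_def using p q f g
    by (simp add: pochhammer_Suc divide_simps)
qed

lemma hc_ode:
  fixes a b c :: complex
  assumes c_ok: "\<forall>m::nat. c \<noteq> - of_nat m"
  defines "F \<equiv> Abs_fps (hc a b c)"
  shows "fps_X * fps_deriv (fps_deriv F) - fps_X * (fps_X * fps_deriv (fps_deriv F))
     + fps_const c * fps_deriv F - fps_const (a+b+1) * (fps_X * fps_deriv F) - fps_const (a*b) * F = 0"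
proof (rule fps_ext)
  fix n
  have r: "\<And>k. hc a b c (Suc k) * ((of_nat k + 1) * (c + of_nat k)) = hc a b c k * ((a + of_nat k) * (b + of_nat k))"
    using hc_rec[OF c_ok] by blast
  show "fps_nth (fps_X * fps_deriv (fps_deriv F) - fps_X * (fps_X * fps_deriv (fps_deriv F))
     + fps_const c * fps_deriv F - fps_const (a+b+1) * (fps_X * fps_deriv F) - fps_const (a*b) * F) n = fps_nth 0 n"
  proof (cases n)
    case 0
    then show ?thesis using r[of 0] by (simp add: F_def fps_deriv_nth mult_ac)
  next
    case (Suc m)
    then show ?thesis using r[of "Suc m"]
      by (cases m) (simp_all add: F_def fps_deriv_nth algebra_simps)
  qed
qed

lemma hc_summable:
  fixes a b c :: complex
  assumes c_ok: "\<forall>m::nat. c \<noteq> - of_nat m"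
  shows "summable (\<lambda>n. hc a b c n * (1/16) ^ n)"
proof -
  define A where "A = norm a + norm b + norm c"
  obtain N :: nat where N: "real N > 2 * A + 1" using reals_Archimedean2 by blast
  have A0: "A \<ge> 0" unfolding A_def by simp
  show ?thesis
  proof (rule summable_ratio_test[where c="1/2" and N=N])
    fix n assume nN: "n \<ge> N"
    have nA: "real n > 2 * A + 1" using N nN by linarith
    have q: "c + of_nat n \<noteq> 0" using c_ok by (metis add.commute add_eq_0_iff)
    have g: "(of_nat n + 1 :: complex) \<noteq> 0" by (metis of_nat_Suc of_nat_eq_0_iff nat.distinct(1) add.commute)
    have e: "hc a b c (Suc n) = hc a b c n * ((a + of_nat n) * (b + of_nat n)) / ((of_nat n + 1) * (c + of_nat n))"
      proof -
      have "(of_nat n + 1) * (c + of_nat n) \<noteq> 0" using q g by simp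
      then show ?thesis using hc_rec[OF c_ok, where n=n and a=a and b=b] by (simp add: eq_divide_eq)
    qed
    have t1: "norm (a + of_nat n) \<le> norm a + real n" using norm_triangle_ineq[of a "of_nat n"] by (simp add: norm_of_nat)
    have t2: "norm (b + of_nat n) \<le> norm b + real n" using norm_triangle_ineq[of b "of_nat n"] by (simp add: norm_of_nat)
    have t3: "norm (c + of_nat n) \<ge> real n - norm c" using norm_triangle_ineq2[of "of_nat n" "-c"] by (simp add: norm_of_nat algebra_simps)
    have nn: "norm a \<ge> 0" "norm b \<ge> 0" "norm c \<ge> 0" by simp_all
    have na: "norm (a + of_nat n) \<le> 2 * real n" using t1 nA nn unfolding A_def by argo
    have nb: "norm (b + of_nat n) \<le> 2 * real n" using t2 nA nn unfolding A_def by argo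
    have nc: "norm (c + of_nat n) \<ge> real n / 2" using t3 nA nn unfolding A_def by argo
    have n1: "norm (of_nat n + 1 :: complex) \<ge> real n"
      by (metis norm_of_nat of_nat_Suc add.commute le_add2 of_nat_le_iff Suc_eq_plus1)
    have npos: "real n > 0" using nA A0 by linarith
    have num: "norm ((a + of_nat n) * (b + of_nat n)) \<le> 4 * real n ^ 2"
      using mult_mono[OF na nb] by (simp add: norm_mult power2_eq_square)
    have den: "norm ((of_nat n + 1) * (c + of_nat n)) \<ge> real n ^ 2 / 2"
      using mult_mono[OF n1 nc] npos by (simp add: norm_mult power2_eq_square)
    have rat: "norm ((a + of_nat n) * (b + of_nat n)) / norm ((of_nat n + 1) * (c + of_nat n)) \<le> 8"
    proof -
      have dp: "norm ((of_nat n + 1) * (c + of_nat n)) > 0" using den npos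
        by (smt (verit) zero_less_power divide_pos_pos)
      have "norm ((a + of_nat n) * (b + of_nat n)) \<le> 8 * norm ((of_nat n + 1) * (c + of_nat n))"
        using num den by linarith
      then show ?thesis using dp by (simp add: divide_simps)
    qed
    have "norm (hc a b c (Suc n) * (1/16) ^ Suc n) = norm (hc a b c n) * (norm ((a + of_nat n) * (b + of_nat n)) / norm ((of_nat n + 1) * (c + of_nat n))) * (1/16) ^ Suc n"
      by (simp add: e norm_mult norm_divide norm_power)
    also have "\<dots> \<le> norm (hc a b c n) * 8 * (1/16) ^ Suc n"
      by (intro mult_right_mono mult_left_mono rat) auto
    also have "\<dots> = 1/2 * norm (hc a b c n * (1/16) ^ n)"
      by (simp add: norm_mult norm_power)
    finally show "norm (hc a b c (Suc n) * (1/16) ^ Suc n) \<le> 1/2 * norm (hc a b c n * (1/16) ^ n)" .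
  qed simp
qed

lemma main_expansion:
  fixes a b c p :: complex and u :: "nat \<Rightarrow> complex"
  assumes c_ok: "\<forall>m::nat. c \<noteq> - of_nat m"
    and expand: "\<forall>z::complex. norm z < 1 \<longrightarrow>
                   (\<lambda>n. u n * z ^ n) sums (exp (p * z) * hyp2f1 a b c z)"
  shows "Abs_fps u = fps_exp p * Abs_fps (hc a b c)"
proof -
  define F where "F = Abs_fps (hc a b c)"
  define U where "U = Abs_fps u"
  have evF: "eval_fps F z = hyp2f1 a b c z" for z
    by (simp add: F_def eval_fps_def hyp2f1_def hc_def)
  have "conv_radius (hc a b c) \<ge> norm (1/16 :: complex)"
    by (rule conv_radius_geI) (use hc_summable[OF c_ok, of a b] in simp)
  hence rF: "fps_conv_radius F > 0"
    unfolding F_def fps_conv_radius_def by (simp add: order.strict_trans2[rotated])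
  have "conv_radius u \<ge> norm (1/2 :: complex)"
    proof (rule conv_radius_geI)
    have "norm (1/2 :: complex) < 1" by simp
    then show "summable (\<lambda>n. u n * (1/2 :: complex) ^ n)" using expand sums_summable by blast
  qed
  hence rU: "fps_conv_radius U > 0"
    unfolding U_def fps_conv_radius_def by (simp add: order.strict_trans2[rotated])
  have e1: "(\<lambda>z. exp (p * z) * eval_fps F z) has_fps_expansion fps_exp p * F"
    by (intro has_fps_expansion_mult has_fps_expansion_exp eval_fps_has_fps_expansion rF)
  have ev: "eventually (\<lambda>z. z \<in> ball (0::complex) 1) (nhds 0)"
    by (rule eventually_nhds_in_open) auto
  have "eventually (\<lambda>z. eval_fps U z = exp (p * z) * eval_fps F z) (nhds 0)"
  proof (rule eventually_mono[OF ev])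
    fix z :: complex assume "z \<in> ball 0 1"
    hence "norm z < 1" by simp
    hence "(\<lambda>n. u n * z ^ n) sums (exp (p * z) * hyp2f1 a b c z)" using expand by blast
    thus "eval_fps U z = exp (p * z) * eval_fps F z"
      unfolding evF by (simp add: U_def eval_fps_def sums_iff)
  qed
  hence e2: "(\<lambda>z. exp (p * z) * eval_fps F z) has_fps_expansion U"
    using rU unfolding has_fps_expansion_def by (auto elim: eventually_mono)
  show ?thesis using fps_expansion_unique_complex[OF e2 e1] unfolding U_def F_def .
qed

theorem theorem3p1:
  fixes a b c p :: complex and u :: "nat \<Rightarrow> complex"
  assumes c_ok: "\<forall>m::nat. c \<noteq> - of_nat m"
    and expand: "\<forall>z::complex. norm z < 1 \<longrightarrow>
                   (\<lambda>n. u n * z ^ n) sums (exp (p * z) * hyp2f1 a b c z)"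
  shows "u 0 = 1 \<and>
         u 1 = a * b / c + p \<and>
         u 2 = a * (1 + a) * b * (1 + b) / (2 * c * (1 + c)) + a * b * p / c + p ^ 2 / 2 \<and>
         (\<forall>n::nat. n \<ge> 2 \<longrightarrow>
           u (n + 1) =
             ((a + of_nat n) * (b + of_nat n) + p * (c + 2 * of_nat n))
               / ((of_nat n + 1) * (c + of_nat n)) * u n
           - p * (a + b + 2 * of_nat n + p - 1) / ((of_nat n + 1) * (c + of_nat n)) * u (n - 1)
           + p ^ 2 / ((of_nat n + 1) * (c + of_nat n)) * u (n - 2))"
proof -
  define F where "F = Abs_fps (hc a b c)"
  define U where "U = Abs_fps u"
  define E where "E = fps_exp p"
  have UEF: "U = E * F" using main_expansion[OF c_ok expand] unfolding U_def E_def F_def .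
  have un: "u n = (\<Sum>i=0..n. p ^ i / fact i * hc a b c (n - i))" for n
  proof -
    have "u n = fps_nth U n" by (simp add: U_def)
    also have "\<dots> = (\<Sum>i=0..n. p ^ i / fact i * hc a b c (n - i))"
      unfolding UEF fps_mult_nth by (simp add: E_def F_def)
    finally show ?thesis .
  qed
  have c0: "c \<noteq> 0" using c_ok by (metis add.right_neutral add_eq_0_iff of_nat_0)
  have c1: "1 + c \<noteq> 0" using c_ok[rule_format, of 1] by (metis add.commute add_eq_0_iff of_nat_1)
  have u0: "u 0 = 1" by (simp add: un hc_def)
  have u1: "u 1 = a * b / c + p" using c0 by (simp add: un hc_def field_simps)
  have u2: "u 2 = a * (1 + a) * b * (1 + b) / (2 * c * (1 + c)) + a * b * p / c + p ^ 2 / 2"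
    using c0 c1 by (simp add: un hc_def field_simps numeral_2_eq_2 pochhammer_Suc power2_eq_square)
  have LF: "fps_X * fps_deriv (fps_deriv F) - fps_X * (fps_X * fps_deriv (fps_deriv F))
     + fps_const c * fps_deriv F - fps_const (a+b+1) * (fps_X * fps_deriv F) - fps_const (a*b) * F = 0"
    unfolding F_def by (rule hc_ode[OF c_ok])
  define D1 where "D1 = fps_deriv U"
  define D2 where "D2 = fps_deriv D1"
  have MU: "fps_X * D2 - fps_X * (fps_X * D2) - fps_const (2*p) * (fps_X * D1) + fps_const (2*p) * (fps_X * (fps_X * D1))
      + fps_const (p^2) * (fps_X * U) - fps_const (p^2) * (fps_X * (fps_X * U))
      + fps_const c * D1 - fps_const (a+b+1) * (fps_X * D1) - fps_const (c*p) * U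
      + fps_const ((a+b+1)*p) * (fps_X * U) - fps_const (a*b) * U
    = E * (fps_X * fps_deriv (fps_deriv F) - fps_X * (fps_X * fps_deriv (fps_deriv F))
     + fps_const c * fps_deriv F - fps_const (a+b+1) * (fps_X * fps_deriv F) - fps_const (a*b) * F)"
  proof -
    have k: "fps_const (2*p) = 2 * fps_const p" "fps_const (p^2) = fps_const p * fps_const p"
      "fps_const (c*p) = fps_const c * fps_const p" "fps_const ((a+b+1)*p) = fps_const (a+b+1) * fps_const p"
      by (simp_all add: power2_eq_square numeral_fps_const)
    show ?thesis
      unfolding k D2_def D1_def UEF E_def
      by (simp only: fps_deriv_mult fps_exp_deriv fps_deriv_add fps_deriv_const mult_zero_left mult_zero_right add_0_left add_0_right) algebra
  qed
  have rec: "u (n + 1) =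
             ((a + of_nat n) * (b + of_nat n) + p * (c + 2 * of_nat n))
               / ((of_nat n + 1) * (c + of_nat n)) * u n
           - p * (a + b + 2 * of_nat n + p - 1) / ((of_nat n + 1) * (c + of_nat n)) * u (n - 1)
           + p ^ 2 / ((of_nat n + 1) * (c + of_nat n)) * u (n - 2)" if n2: "n \<ge> 2" for n
  proof -
    obtain m where m: "n = Suc (Suc m)" using n2 by (metis add_2_eq_Suc le_Suc_ex)
    have "fps_nth (E * (fps_X * fps_deriv (fps_deriv F) - fps_X * (fps_X * fps_deriv (fps_deriv F))
     + fps_const c * fps_deriv F - fps_const (a+b+1) * (fps_X * fps_deriv F) - fps_const (a*b) * F)) n = 0"
      unfolding LF by simp
    hence "fps_nth (fps_X * D2 - fps_X * (fps_X * D2) - fps_const (2*p) * (fps_X * D1) + fps_const (2*p) * (fps_X * (fps_X * D1))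
      + fps_const (p^2) * (fps_X * U) - fps_const (p^2) * (fps_X * (fps_X * U))
      + fps_const c * D1 - fps_const (a+b+1) * (fps_X * D1) - fps_const (c*p) * U
      + fps_const ((a+b+1)*p) * (fps_X * U) - fps_const (a*b) * U) n = 0"
      unfolding MU .
    hence eq: "(of_nat n + 1) * of_nat n * u (n+1) - of_nat n * (of_nat n - 1) * u n
       - 2 * p * of_nat n * u n + 2 * p * (of_nat n - 1) * u (n - 1)
       + p^2 * u (n - 1) - p^2 * u (n - 2) + c * (of_nat n + 1) * u (n + 1)
       - (a+b+1) * of_nat n * u n - c * p * u n + (a+b+1) * p * u (n - 1) - a * b * u n = 0"
      unfolding m D2_def D1_def U_def by (simp add: fps_deriv_nth algebra_simps)
    have dz: "(of_nat n + 1) * (c + of_nat n) \<noteq> 0"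
    proof -
      have "c + of_nat n \<noteq> 0" using c_ok by (metis add.commute add_eq_0_iff)
      moreover have "(of_nat n + 1 :: complex) \<noteq> 0" by (metis of_nat_Suc of_nat_eq_0_iff nat.distinct(1) add.commute)
      ultimately show ?thesis by simp
    qed
    have "(of_nat n + 1) * (c + of_nat n) * u (n + 1) =
             ((a + of_nat n) * (b + of_nat n) + p * (c + 2 * of_nat n)) * u n
           - p * (a + b + 2 * of_nat n + p - 1) * u (n - 1)
           + p ^ 2 * u (n - 2)"
      using eq by algebra
    then have "u (n + 1) = (((a + of_nat n) * (b + of_nat n) + p * (c + 2 * of_nat n)) * u n
           - p * (a + b + 2 * of_nat n + p - 1) * u (n - 1)
           + p ^ 2 * u (n - 2)) / ((of_nat n + 1) * (c + of_nat n))"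
      using dz by (simp add: eq_divide_eq mult.commute)
    then show ?thesis by (simp add: add_divide_distrib diff_divide_distrib algebra_simps)
  qed
  show ?thesis using u0 u1 u2 rec by blast
qed

end
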